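(* Let $S=\begin{pmatrix}A&B\\C&D\end{pmatrix}\in\mathrm{Sp}(d,\mathbb R)$. Then $\mathbb R^d=\ker(B)^\perp\oplus D^TA(\ker(B))$.
   Context: $\mathrm{Sp}(d,\mathbb R)$ is the group of real $2d\times 2d$ matrices $S$ with $S^TJS=J$, $J=\begin{pmatrix}0_d&I_d\\-I_d&0_d\end{pmatrix}$, written in $d\times d$ blocks $A,B,C,D$. $\ker(B)^\perp$ is the orthogonal complement of the kernel of $B$ for the standard inner product; $\oplus$ denotes a (not necessarily orthogonal) direct sum. *)

theory Defs
  imports "HOL-Analysis.Analysis"
begin

text \<open>Real 2d x 2d matrices are indexed by the sum type 'n + 'n, with d = CARD('n);
  the first copy (Inl) indexes the first d coordinates, the second (Inr) the last d.\<close>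

definition symplJ :: "real ^ ('n::finite + 'n) ^ ('n + 'n)" where
  "symplJ = (\<chi> i j. case (i, j) of
       (Inl a, Inr b) \<Rightarrow> (if a = b then 1 else 0)
     | (Inr a, Inl b) \<Rightarrow> (if a = b then -1 else 0)
     | _ \<Rightarrow> 0)"

definition Sp :: "(real ^ ('n::finite + 'n) ^ ('n + 'n)) set" where
  "Sp = {S. transpose S ** symplJ ** S = symplJ}"

definition blkA :: "real ^ ('n::finite + 'n) ^ ('n + 'n) \<Rightarrow> real ^ 'n ^ 'n" where
  "blkA S = (\<chi> i j. S $ Inl i $ Inl j)"
definition blkB :: "real ^ ('n::finite + 'n) ^ ('n + 'n) \<Rightarrow> real ^ 'n ^ 'n" where
  "blkB S = (\<chi> i j. S $ Inl i $ Inr j)"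
definition blkC :: "real ^ ('n::finite + 'n) ^ ('n + 'n) \<Rightarrow> real ^ 'n ^ 'n" where
  "blkC S = (\<chi> i j. S $ Inr i $ Inl j)"
definition blkD :: "real ^ ('n::finite + 'n) ^ ('n + 'n) \<Rightarrow> real ^ 'n ^ 'n" where
  "blkD S = (\<chi> i j. S $ Inr i $ Inr j)"

definition mat_kernel :: "real ^ 'n ^ 'm \<Rightarrow> (real ^ 'n) set" where
  "mat_kernel M = {x. M *v x = 0}"

definition is_direct_sum :: "'a::real_vector set \<Rightarrow> 'a set \<Rightarrow> 'a set \<Rightarrow> bool" where
  "is_direct_sum X U V \<longleftrightarrow> subspace U \<and> subspace V \<and> U \<inter> V = {0} \<and>
     X = {u + v | u v. u \<in> U \<and> v \<in> V}"

end

theory Submission imports Defs begin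

lemma sum_UNIV_Plus: "sum f (UNIV :: ('a::finite + 'b::finite) set) = sum (\<lambda>a. f (Inl a)) UNIV + sum (\<lambda>b. f (Inr b)) UNIV"
  using sum.Plus[of "UNIV::'a set" "UNIV::'b set" f] by (simp add: comp_def)

lemma TJ_Inr:
  fixes S :: "real ^ ('n::finite + 'n) ^ ('n + 'n)"
  shows "(transpose S ** symplJ) $ Inl j $ Inr i = S $ Inl i $ Inl j"
  by (simp add: matrix_matrix_mult_def transpose_def symplJ_def sum_UNIV_Plus if_distrib[of "\<lambda>x. _ * x"] cong: if_cong)

lemma TJ_Inl:
  fixes S :: "real ^ ('n::finite + 'n) ^ ('n + 'n)"
  shows "(transpose S ** symplJ) $ Inl j $ Inl i = - S $ Inr i $ Inl j"
  by (simp add: matrix_matrix_mult_def transpose_def symplJ_def sum_UNIV_Plus if_distrib[of "\<lambda>x. _ * x"] cong: if_cong)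

lemma key_entry:
  fixes S :: "real ^ ('n::finite + 'n) ^ ('n + 'n)"
  assumes "S \<in> Sp"
  shows "(\<Sum>a\<in>UNIV. S $ Inl a $ Inl j * S $ Inr a $ Inr i) - (\<Sum>a\<in>UNIV. S $ Inr a $ Inl j * S $ Inl a $ Inr i) = (if i = j then 1 else 0)"
proof -
  have "(transpose S ** symplJ ** S) $ Inl j $ Inr i = symplJ $ Inl j $ Inr i"
    using assms by (simp add: Sp_def)
  moreover have "(transpose S ** symplJ ** S) $ Inl j $ Inr i = (\<Sum>a\<in>UNIV. S $ Inl a $ Inl j * S $ Inr a $ Inr i) - (\<Sum>a\<in>UNIV. S $ Inr a $ Inl j * S $ Inl a $ Inr i)"
    by (simp add: matrix_matrix_mult_def[of "transpose S ** symplJ" S] sum_UNIV_Plus TJ_Inr TJ_Inl sum_negf)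
  moreover have "symplJ $ Inl j $ Inr i = (if i = j then 1 else (0::real))"
    by (auto simp: symplJ_def)
  ultimately show ?thesis by simp
qed

lemma key_matrix:
  fixes S :: "real ^ ('n::finite + 'n) ^ ('n + 'n)"
  assumes "S \<in> Sp"
  shows "transpose (blkD S) ** blkA S = mat 1 + transpose (blkB S) ** blkC S"
proof -
  have "(transpose (blkD S) ** blkA S) $ i $ j = (mat 1 + transpose (blkB S) ** blkC S) $ i $ j" for i j
    using key_entry[OF assms, of j i]
    by (simp add: matrix_matrix_mult_def transpose_def blkA_def blkB_def blkC_def blkD_def mat_def mult.commute algebra_simps)
  then show ?thesis by (simp add: vec_eq_iff)
qed

lemma key_vec:
  fixes S :: "real ^ ('n::finite + 'n) ^ ('n + 'n)"
  assumes "S \<in> Sp"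
  shows "(transpose (blkD S) ** blkA S) *v x = x + transpose (blkB S) *v (blkC S *v x)"
  by (simp add: key_matrix[OF assms] matrix_vector_mult_add_rdistrib matrix_vector_mul_assoc)

lemma transp_in_orth:
  fixes B :: "real ^ 'n ^ 'n"
  shows "transpose B *v z \<in> orthogonal_comp (mat_kernel B)"
proof -
  have "transpose B *v z = z v* B"
    by (metis vector_transpose_matrix transpose_transpose)
  then show ?thesis
    unfolding orthogonal_comp_def orthogonal_def mat_kernel_def
  proof (intro CollectI ballI)
    fix y assume "y \<in> {x. B *v x = 0}"
    then have "B *v y = 0" by simp
    then show "y \<bullet> (transpose B *v z) = 0"
      using \<open>transpose B *v z = z v* B\<close> dot_lmul_matrix[of z B y] inner_commute[of y] by simp
  qed
qed

theorem lemma3p6: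
  fixes S :: "real ^ ('n::finite + 'n) ^ ('n + 'n)"
  assumes "S \<in> Sp"
  shows "is_direct_sum (UNIV :: (real ^ 'n) set)
           (orthogonal_comp (mat_kernel (blkB S)))
           ((\<lambda>x. (transpose (blkD S) ** blkA S) *v x) ` mat_kernel (blkB S))"
proof -
  let ?K = "mat_kernel (blkB S)"
  let ?M = "transpose (blkD S) ** blkA S"
  have subK: "subspace ?K"
    unfolding subspace_def mat_kernel_def
    by (simp add: matrix_vector_right_distrib matrix_vector_mult_scaleR)
  have sub2: "subspace ((\<lambda>x. ?M *v x) ` ?K)"
    by (rule linear_subspace_image[OF _ subK]) simp
  have int: "orthogonal_comp ?K \<inter> (\<lambda>x. ?M *v x) ` ?K = {0}"
  proof (rule set_eqI, rule iffI)
    fix y assume "y \<in> orthogonal_comp ?K \<inter> (\<lambda>x. ?M *v x) ` ?K"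
    then obtain x where y: "y \<in> orthogonal_comp ?K" and x: "x \<in> ?K" and yx: "y = ?M *v x" by blast
    have "x = y - transpose (blkB S) *v (blkC S *v x)" using yx key_vec[OF assms, of x] by simp
    moreover have "y - transpose (blkB S) *v (blkC S *v x) \<in> orthogonal_comp ?K"
      by (rule subspace_diff[OF subspace_orthogonal_comp y transp_in_orth])
    ultimately have "x \<in> orthogonal_comp ?K" by simp
    with x have "orthogonal x x" by (simp add: orthogonal_comp_def)
    then have "x = 0" by (simp add: orthogonal_self)
    then show "y \<in> {0}" using yx by simp
  next
    fix y :: "real ^ 'n" assume "y \<in> {0}"
    have "0 \<in> orthogonal_comp ?K" by (rule subspace_0[OF subspace_orthogonal_comp])
    moreover have "0 \<in> (\<lambda>x. ?M *v x) ` ?K" by (rule image_eqI[of _ _ 0]) (simp_all add: subspace_0[OF subK])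
    ultimately show "y \<in> orthogonal_comp ?K \<inter> (\<lambda>x. ?M *v x) ` ?K" using \<open>y \<in> {0}\<close> by simp
  qed
  have sum: "UNIV = {u + v | u v. u \<in> orthogonal_comp ?K \<and> v \<in> (\<lambda>x. ?M *v x) ` ?K}"
  proof (rule set_eqI, rule iffI)
    fix y :: "real ^ 'n"
    have "y \<in> ?K + orthogonal_comp ?K" using subspace_sum_orthogonal_comp[OF subK] by simp
    then obtain u w where u: "u \<in> ?K" and w: "w \<in> orthogonal_comp ?K" and yuw: "y = u + w"
      by (meson set_plus_elim)
    have "w - transpose (blkB S) *v (blkC S *v u) \<in> orthogonal_comp ?K"
      by (rule subspace_diff[OF subspace_orthogonal_comp w transp_in_orth])
    moreover have "?M *v u \<in> (\<lambda>x. ?M *v x) ` ?K" using u by blast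
    moreover have "y = (w - transpose (blkB S) *v (blkC S *v u)) + ?M *v u"
      using yuw key_vec[OF assms, of u] by simp
    ultimately show "y \<in> {u + v | u v. u \<in> orthogonal_comp ?K \<and> v \<in> (\<lambda>x. ?M *v x) ` ?K}"
      by (intro CollectI exI conjI) assumption+
  qed simp
  show ?thesis unfolding is_direct_sum_def
    by (intro conjI subspace_orthogonal_comp sub2 int sum)
qed
end
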